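(* Let $\Gamma\subset\mathbb{R}^2$ be the half-lemniscate $\Gamma=\{(\cos 2\theta\cos\theta,\ \cos2\theta\sin\theta) : |\theta|\le\pi/4\}$ (given in polar coordinates by $r=\cos2\theta$, $|\theta|\le\pi/4$). Let $T$ be a triangle with vertices $A,B,C$ such that $|CA|=|CB|$, the segment $AB$ is vertical, $C$ lies strictly to the left of the line $AB$, and the angle of $T$ at $C$ is obtuse. Then there is no composition $\phi$ of a translation and a homothety with positive ratio such that $\phi(A),\phi(B),\phi(C)$ all lie on $\Gamma$. In particular, the conclusion of the Main Theorem (every non-flat triangle can be placed with its vertices on the curve by a translation and a positive homothety) fails for this Jordan curve, which is $\mathcal{C}^\infty$ except at the origin, where it has two tangents forming a right angle. *)

theory Defs
  imports "HOL-Analysis.Analysis"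
begin

definition half_lemniscate :: "(real \<times> real) set" where
  "half_lemniscate = {(cos (2*\<theta>) * cos \<theta>, cos (2*\<theta>) * sin \<theta>) | \<theta>. \<bar>\<theta>\<bar> \<le> pi/4}"

end

theory Submission
  imports Defs
begin

lemma lem_mono:
  fixes u v :: real
  assumes "0 \<le> u" "u < v" "v \<le> pi/4"
  shows "cos (2 * v) * cos v < cos (2 * u) * cos u"
proof -
  have c1: "cos v < cos u" using assms by (intro cos_monotone_0_pi) auto
  have c2: "cos (2 * v) < cos (2 * u)" using assms by (intro cos_monotone_0_pi) auto
  have p1: "cos (2 * v) \<ge> 0" using assms by (intro cos_ge_zero) auto
  have p2: "cos u > 0" using assms by (intro cos_gt_zero_pi) auto
  have "cos (2 * v) * cos v \<le> cos (2 * v) * cos u" using c1 p1 by (intro mult_left_mono) auto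
  also have "\<dots> < cos (2 * u) * cos u" using c2 p2 by (intro mult_strict_right_mono) auto
  finally show ?thesis .
qed

lemma lem_even: "cos (2*\<bar>x\<bar>) * cos \<bar>x\<bar> = cos (2 * x) * cos (x::real)"
  by (cases "x \<ge> 0") auto

lemma lem_abs_eq:
  fixes a b :: real
  assumes "\<bar>a\<bar> \<le> pi/4" "\<bar>b\<bar> \<le> pi/4" "cos (2 * a) * cos a = cos (2 * b) * cos b"
  shows "\<bar>a\<bar> = \<bar>b\<bar>"
proof -
  have e: "cos (2*\<bar>a\<bar>) * cos \<bar>a\<bar> = cos (2*\<bar>b\<bar>) * cos \<bar>b\<bar>"
    using assms(3) lem_even by metis
  show ?thesis
  proof (rule ccontr)
    assume "\<bar>a\<bar> \<noteq> \<bar>b\<bar>"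
    then consider "\<bar>a\<bar> < \<bar>b\<bar>" | "\<bar>b\<bar> < \<bar>a\<bar>" by linarith
    then show False
    proof cases
      case 1 then show False using lem_mono[of "\<bar>a\<bar>" "\<bar>b\<bar>"] e assms by auto
    next
      case 2 then show False using lem_mono[of "\<bar>b\<bar>" "\<bar>a\<bar>"] e assms by auto
    qed
  qed
qed

lemma key:
  fixes P Q R :: "real \<times> real"
  assumes hP: "P \<in> half_lemniscate" and hQ: "Q \<in> half_lemniscate" and hR: "R \<in> half_lemniscate"
    and ne: "P \<noteq> Q" and fx: "fst P = fst Q" and lt: "fst R < fst P"
    and d: "dist R P = dist R Q" and inn: "inner (P - R) (Q - R) < 0"
  shows False
proof -
  obtain t1 where t1: "\<bar>t1\<bar> \<le> pi/4" "P = (cos (2 * t1) * cos t1, cos (2 * t1) * sin t1)"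
    using hP unfolding half_lemniscate_def by auto
  obtain t2 where t2: "\<bar>t2\<bar> \<le> pi/4" "Q = (cos (2 * t2) * cos t2, cos (2 * t2) * sin t2)"
    using hQ unfolding half_lemniscate_def by auto
  obtain t3 where t3: "\<bar>t3\<bar> \<le> pi/4" "R = (cos (2 * t3) * cos t3, cos (2 * t3) * sin t3)"
    using hR unfolding half_lemniscate_def by auto
  define a where "a = cos (2 * t1) * cos t1"
  define y1 where "y1 = cos (2 * t1) * sin t1"
  define y2 where "y2 = cos (2 * t2) * sin t2"
  define x0 where "x0 = cos (2 * t3) * cos t3"
  define y0 where "y0 = cos (2 * t3) * sin t3"
  have fe: "cos (2 * t1) * cos t1 = cos (2 * t2) * cos t2" using fx t1(2) t2(2) by simp
  have "\<bar>t1\<bar> = \<bar>t2\<bar>" using lem_abs_eq[OF t1(1) t2(1) fe] .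
  moreover have "t1 \<noteq> t2" using ne t1(2) t2(2) by metis
  ultimately have t21: "t2 = - t1" by linarith
  have P: "P = (a, y1)" using t1(2) unfolding a_def y1_def by simp
  have Q: "Q = (a, -y1)" using t2(2) unfolding t21 a_def y1_def by simp
  have R: "R = (x0, y0)" using t3(2) unfolding x0_def y0_def by simp
  have y1ne: "y1 \<noteq> 0" using ne P Q by auto
  have "sqrt ((x0 - a)^2 + (y0 - y1)^2) = sqrt ((x0 - a)^2 + (y0 + y1)^2)"
    using d P Q R by (simp add: dist_Pair_Pair dist_real_def)
  hence "(x0 - a)^2 + (y0 - y1)^2 = (x0 - a)^2 + (y0 + y1)^2"
    by (simp add: sum_power2_ge_zero)
  hence "y0 * y1 = 0" by (simp add: power2_eq_square algebra_simps)
  hence y0: "y0 = 0" using y1ne by simp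
  have inn2: "(a - x0)^2 < y1^2"
    using inn P Q R y0 by (simp add: inner_Pair power2_eq_square algebra_simps)
  have c2: "cos (2 * t1) \<ge> 0" using t1(1) by (intro cos_ge_zero) (auto simp: abs_le_iff)
  have ay: "a^2 - y1^2 = (cos (2 * t1))^2 * cos (2 * t1)"
  proof -
    have "cos (2 * t1) = (cos t1)^2 - (sin t1)^2" by (rule cos_double)
    then show ?thesis unfolding a_def y1_def
      by (simp add: power_mult_distrib right_diff_distrib[symmetric])
  qed
  have ay2: "a^2 - y1^2 \<ge> 0" using ay c2 by simp
  have "cos (2 * t3) = 0 \<or> sin t3 = 0" using y0 unfolding y0_def by (simp only: mult_eq_0_iff)
  then show False
  proof
    assume "cos (2 * t3) = 0"
    hence "x0 = 0" unfolding x0_def by simp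
    thus False using inn2 ay2 by simp
  next
    assume "sin t3 = 0"
    moreover have "- pi < t3" "t3 < pi" using t3(1) pi_gt3 by (auto simp: abs_le_iff)
    ultimately have "t3 = 0" using sin_eq_0_pi by blast
    hence "x0 = 1" unfolding x0_def by simp
    moreover have "a \<le> 1" unfolding a_def
    proof -
      have "\<bar>cos (2 * t1) * cos t1\<bar> \<le> 1" unfolding abs_mult
        by (intro mult_le_one) auto
      thus "cos (2 * t1) * cos t1 \<le> 1" by linarith
    qed
    ultimately show False using lt P R by simp
  qed
qed

theorem mainTheorem2:
  fixes A B C :: "real \<times> real"
  assumes "A \<noteq> B"
    and "dist C A = dist C B"
    and "fst A = fst B"
    and "fst C < fst A"
    and "inner (A - C) (B - C) < 0"
  shows "\<not> (\<exists>(c::real) (t::real \<times> real). c > 0 \<and>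
            t + c *\<^sub>R A \<in> half_lemniscate \<and>
            t + c *\<^sub>R B \<in> half_lemniscate \<and>
            t + c *\<^sub>R C \<in> half_lemniscate)"
proof
  assume "\<exists>(c::real) (t::real \<times> real). c > 0 \<and>
            t + c *\<^sub>R A \<in> half_lemniscate \<and>
            t + c *\<^sub>R B \<in> half_lemniscate \<and>
            t + c *\<^sub>R C \<in> half_lemniscate"
  then obtain c t where c: "c > 0" and h: "t + c *\<^sub>R A \<in> half_lemniscate"
     "t + c *\<^sub>R B \<in> half_lemniscate" "t + c *\<^sub>R C \<in> half_lemniscate" by blast
  show False
  proof (rule key[OF h])
    show "t + c *\<^sub>R A \<noteq> t + c *\<^sub>R B" using assms(1) c by simp
    show "fst (t + c *\<^sub>R A) = fst (t + c *\<^sub>R B)" using assms(3) by simp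
    show "fst (t + c *\<^sub>R C) < fst (t + c *\<^sub>R A)" using assms(4) c by simp
    have dd: "dist (t + c *\<^sub>R C) (t + c *\<^sub>R X) = \<bar>c\<bar> * dist C X" for X
      by (simp add: dist_norm scaleR_diff_right[symmetric])
    show "dist (t + c *\<^sub>R C) (t + c *\<^sub>R A) = dist (t + c *\<^sub>R C) (t + c *\<^sub>R B)"
      by (metis dd assms(2))
    have "inner (t + c *\<^sub>R A - (t + c *\<^sub>R C)) (t + c *\<^sub>R B - (t + c *\<^sub>R C))
          = c * c * inner (A - C) (B - C)"
    proof -
      have "t + c *\<^sub>R A - (t + c *\<^sub>R C) = c *\<^sub>R (A - C)" "t + c *\<^sub>R B - (t + c *\<^sub>R C) = c *\<^sub>R (B - C)"
        by (simp_all add: scaleR_diff_right)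
      then show ?thesis by simp
    qed
    also have "\<dots> < 0" using assms(5) c by (simp add: mult_pos_neg)
    finally show "inner (t + c *\<^sub>R A - (t + c *\<^sub>R C)) (t + c *\<^sub>R B - (t + c *\<^sub>R C)) < 0" .
  qed
qed

end
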